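(* Let $P$ be a convex polyhedron and let $O$ be its topological interior in its affine hull $\mathrm{Aff}\,P$. Then $\mathrm{Logic}(P)=\mathrm{Logic}(O)$.
   Context: A polyhedron is a finite union of convex hulls of finite subsets of some $\mathbb R^d$; it is convex if it is a convex set. An open subpolyhedron of $P$ is $P\setminus R$ with $R\subseteq P$ a polyhedron; $\mathrm{Sub}_o P$ denotes the Heyting algebra of open subpolyhedra of $P$, and $\mathrm{Logic}(P)$ is the set of intuitionistic formulas valid on $\mathrm{Sub}_o P$. The set $O$ is an open subpolyhedron of $P$, and $\mathrm{Logic}(O)$ denotes the set of formulas valid on the Heyting algebra $\mathrm{Sub}_o O:=\{U\cap O: U\in\mathrm{Sub}_o P\}$. *)

theory Defs
  imports "HOL-Analysis.Analysis"
begin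

text \<open>Polyhedra in the sense of the paper: finite unions of convex hulls of finite sets.
  (Named pl_polyhedron to avoid a clash with the library's halfspace notion.)\<close>
definition pl_polyhedron :: "'a::euclidean_space set \<Rightarrow> bool" where
  "pl_polyhedron S \<longleftrightarrow>
     (\<exists>\<F>. finite \<F> \<and> (\<forall>A\<in>\<F>. finite A) \<and> S = \<Union> ((\<lambda>A. convex hull A) ` \<F>))"

definition Sub_o :: "'a::euclidean_space set \<Rightarrow> 'a set set" where
  "Sub_o P = {P - R | R. R \<subseteq> P \<and> pl_polyhedron R}"

definition Sub_o_rel :: "'a::euclidean_space set \<Rightarrow> 'a set \<Rightarrow> 'a set set" where
  "Sub_o_rel P Q = {U \<inter> Q | U. U \<in> Sub_o P}"

datatype ipc_form =
    PVar nat
  | FBot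
  | FTop
  | FConj ipc_form ipc_form
  | FDisj ipc_form ipc_form
  | FImp ipc_form ipc_form

text \<open>Interpretation in a lattice of sets L with top element X, ordered by inclusion,
  meet = intersection, join = union, bottom = empty set; the Heyting implication
  U \<rightarrow> V is the greatest element W of L with W \<inter> U \<subseteq> V, i.e. the union of all such W.\<close>
fun heval :: "'a set set \<Rightarrow> 'a set \<Rightarrow> (nat \<Rightarrow> 'a set) \<Rightarrow> ipc_form \<Rightarrow> 'a set" where
  "heval L X v (PVar n) = v n"
| "heval L X v FBot = {}"
| "heval L X v FTop = X"
| "heval L X v (FConj a b) = heval L X v a \<inter> heval L X v b"
| "heval L X v (FDisj a b) = heval L X v a \<union> heval L X v b"
| "heval L X v (FImp a b) = \<Union> {W \<in> L. W \<inter> heval L X v a \<subseteq> heval L X v b}"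

definition Logic_of :: "'a set set \<Rightarrow> 'a set \<Rightarrow> ipc_form set" where
  "Logic_of L X = {\<phi>. \<forall>v. (\<forall>n. v n \<in> L) \<longrightarrow> heval L X v \<phi> = X}"

end

theory Submission
  imports Defs
begin


lemma heval_sub:
  assumes "\<forall>W\<in>L. W \<subseteq> X" "\<forall>n. v n \<in> L"
  shows "heval L X v \<phi> \<subseteq> X"
  using assms by (induction \<phi>) auto

lemma dir1_eval:
  assumes OL: "Q \<in> L" and IL: "\<forall>U\<in>L. \<forall>V\<in>L. U \<inter> V \<in> L" and OX: "Q \<subseteq> X"
  shows "heval {W \<inter> Q | W. W \<in> L} Q (\<lambda>n. U n \<inter> Q) \<phi> = heval L X U \<phi> \<inter> Q"
proof (induction \<phi>)
  case (FImp p q)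
  let ?L' = "{W \<inter> Q | W. W \<in> L}"
  let ?A = "heval L X U p" and ?B = "heval L X U q"
  show ?case
  proof (rule set_eqI, rule iffI)
    fix y assume "y \<in> heval ?L' Q (\<lambda>n. U n \<inter> Q) (FImp p q)"
    then obtain W where W: "W \<in> L" "y \<in> W \<inter> Q" "W \<inter> Q \<inter> (?A \<inter> Q) \<subseteq> ?B \<inter> Q"
      using FImp by auto
    have "W \<inter> Q \<in> L" using IL W OL by blast
    moreover have "W \<inter> Q \<inter> ?A \<subseteq> ?B" using W by blast
    ultimately show "y \<in> heval L X U (FImp p q) \<inter> Q" using W by auto
  next
    fix y assume "y \<in> heval L X U (FImp p q) \<inter> Q"
    then obtain V where V: "V \<in> L" "y \<in> V" "V \<inter> ?A \<subseteq> ?B" "y \<in> Q" by auto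
    have "V \<inter> Q \<in> ?L'" using V by blast
    moreover have "V \<inter> Q \<inter> (?A \<inter> Q) \<subseteq> ?B \<inter> Q" using V by blast
    ultimately show "y \<in> heval ?L' Q (\<lambda>n. U n \<inter> Q) (FImp p q)" using FImp V by auto
  qed
qed (use OX in auto)

lemma dir1:
  assumes OL: "Q \<in> L" and IL: "\<forall>U\<in>L. \<forall>V\<in>L. U \<inter> V \<in> L" and OX: "Q \<subseteq> X"
  shows "Logic_of L X \<subseteq> Logic_of {W \<inter> Q | W. W \<in> L} Q"
proof
  fix \<phi> assume \<phi>: "\<phi> \<in> Logic_of L X"
  show "\<phi> \<in> Logic_of {W \<inter> Q | W. W \<in> L} Q"
    unfolding Logic_of_def
  proof (intro CollectI allI impI)
    fix v :: "nat \<Rightarrow> _" assume v: "\<forall>n. v n \<in> {W \<inter> Q | W. W \<in> L}"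
    define U where "U n = (SOME W. W \<in> L \<and> v n = W \<inter> Q)" for n
    have U: "U n \<in> L \<and> v n = U n \<inter> Q" for n
      unfolding U_def by (rule someI_ex) (use v in blast)
    have "v = (\<lambda>n. U n \<inter> Q)" using U by auto
    then have "heval {W \<inter> Q | W. W \<in> L} Q v \<phi> = heval L X U \<phi> \<inter> Q"
      using dir1_eval[OF OL IL OX] by simp
    also have "heval L X U \<phi> = X" using \<phi> U unfolding Logic_of_def by auto
    finally show "heval {W \<inter> Q | W. W \<in> L} Q v \<phi> = Q" using OX by auto
  qed
qed

lemma dir2_eval:
  assumes L'Q: "\<forall>W\<in>L'. W \<subseteq> Q"
    and pre: "\<forall>V\<in>L. {y\<in>Q. \<rho> y \<in> V} \<in> L'"
    and opn: "\<forall>W\<in>L'. \<forall>y\<in>W. \<exists>V\<in>L. \<rho> y \<in> V \<and> V \<subseteq> \<rho> ` W"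
    and rX: "\<rho> ` Q \<subseteq> X"
  shows "heval L' Q (\<lambda>n. {y\<in>Q. \<rho> y \<in> U n}) \<phi> = {y\<in>Q. \<rho> y \<in> heval L X U \<phi>}"
proof (induction \<phi>)
  case (FImp p q)
  let ?A = "heval L X U p" and ?B = "heval L X U q"
  show ?case
  proof (rule set_eqI, rule iffI)
    fix y assume "y \<in> heval L' Q (\<lambda>n. {y\<in>Q. \<rho> y \<in> U n}) (FImp p q)"
    then obtain W where W: "W \<in> L'" "y \<in> W" "W \<inter> {y\<in>Q. \<rho> y \<in> ?A} \<subseteq> {y\<in>Q. \<rho> y \<in> ?B}"
      using FImp by auto
    obtain V where V: "V \<in> L" "\<rho> y \<in> V" "V \<subseteq> \<rho> ` W" using opn W by blast
    have WO: "W \<subseteq> Q" using L'Q W by blast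
    have "V \<inter> ?A \<subseteq> ?B"
    proof
      fix x assume "x \<in> V \<inter> ?A"
      then obtain w where "w \<in> W" "x = \<rho> w" "x \<in> ?A" using V by blast
      then show "x \<in> ?B" using W WO by blast
    qed
    then show "y \<in> {y\<in>Q. \<rho> y \<in> heval L X U (FImp p q)}" using V W WO by auto
  next
    fix y assume "y \<in> {y\<in>Q. \<rho> y \<in> heval L X U (FImp p q)}"
    then obtain V where V: "V \<in> L" "\<rho> y \<in> V" "V \<inter> ?A \<subseteq> ?B" "y \<in> Q" by auto
    have "{y\<in>Q. \<rho> y \<in> V} \<in> L'" using pre V by blast
    moreover have "{y\<in>Q. \<rho> y \<in> V} \<inter> {y\<in>Q. \<rho> y \<in> ?A} \<subseteq> {y\<in>Q. \<rho> y \<in> ?B}" using V by blast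
    ultimately show "y \<in> heval L' Q (\<lambda>n. {y\<in>Q. \<rho> y \<in> U n}) (FImp p q)" using FImp V by auto
  qed
qed (use rX in auto)

lemma dir2:
  assumes L'Q: "\<forall>W\<in>L'. W \<subseteq> Q"
    and pre: "\<forall>V\<in>L. {y\<in>Q. \<rho> y \<in> V} \<in> L'"
    and opn: "\<forall>W\<in>L'. \<forall>y\<in>W. \<exists>V\<in>L. \<rho> y \<in> V \<and> V \<subseteq> \<rho> ` W"
    and rX: "\<rho> ` Q = X" and LX: "\<forall>W\<in>L. W \<subseteq> X"
  shows "Logic_of L' Q \<subseteq> Logic_of L X"
proof
  fix \<phi> assume \<phi>: "\<phi> \<in> Logic_of L' Q"
  show "\<phi> \<in> Logic_of L X"
    unfolding Logic_of_def
  proof (intro CollectI allI impI)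
    fix U :: "nat \<Rightarrow> _" assume U: "\<forall>n. U n \<in> L"
    have UL: "\<forall>n. {y\<in>Q. \<rho> y \<in> U n} \<in> L'" using U pre by blast
    have H: "\<forall>v. (\<forall>n. v n \<in> L') \<longrightarrow> heval L' Q v \<phi> = Q" using \<phi> unfolding Logic_of_def by blast
    have "heval L' Q (\<lambda>n. {y\<in>Q. \<rho> y \<in> U n}) \<phi> = Q" by (rule H[rule_format]) (use UL in blast)
    moreover have "heval L' Q (\<lambda>n. {y\<in>Q. \<rho> y \<in> U n}) \<phi> = {y\<in>Q. \<rho> y \<in> heval L X U \<phi>}"
      by (rule dir2_eval[OF L'Q pre opn]) (use rX in blast)
    ultimately have "{y\<in>Q. \<rho> y \<in> heval L X U \<phi>} = Q" by simp
    then have "X \<subseteq> heval L X U \<phi>" using rX by blast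
    moreover have "heval L X U \<phi> \<subseteq> X" using heval_sub LX U by blast
    ultimately show "heval L X U \<phi> = X" by blast
  qed
qed


lemma isCont_Max_ins:
  fixes f :: "'i \<Rightarrow> 'a::t2_space \<Rightarrow> real"
  assumes "finite S" "\<And>h. h \<in> S \<Longrightarrow> isCont (f h) x"
  shows "isCont (\<lambda>y. Max (insert 0 ((\<lambda>h. f h y) ` S))) x"
  using assms
proof (induction S rule: finite_induct)
  case empty then show ?case by simp
next
  case (insert i S)
  have eq: "(\<lambda>y. Max (insert 0 ((\<lambda>h. f h y) ` insert i S))) =
        (\<lambda>y. max (f i y) (Max (insert 0 ((\<lambda>h. f h y) ` S))))"
  proof
    fix y
    have "insert 0 ((\<lambda>h. f h y) ` insert i S) = insert (f i y) (insert 0 ((\<lambda>h. f h y) ` S))"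
      by auto
    then show "Max (insert 0 ((\<lambda>h. f h y) ` insert i S)) = max (f i y) (Max (insert 0 ((\<lambda>h. f h y) ` S)))"
      using insert(1) by simp
  qed
  show ?case unfolding eq
    by (intro continuous_max) (use insert in auto)
qed

locale gs =
  fixes P :: "'a::euclidean_space set" and c :: 'a and F :: "'a set set"
    and a :: "'a set \<Rightarrow> 'a" and b :: "'a set \<Rightarrow> real"
  assumes poly: "polytope P"
    and finF: "finite F"
    and seq: "P = affine hull P \<inter> \<Inter>F"
    and faceq: "\<And>h. h \<in> F \<Longrightarrow> a h \<noteq> 0 \<and> h = {x. a h \<bullet> x \<le> b h}"
    and relint: "rel_interior P = {x\<in>P. \<forall>h\<in>F. a h \<bullet> x < b h}"
    and cO: "c \<in> rel_interior P"
begin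

definition l where "l h y = (a h \<bullet> y - a h \<bullet> c) / (b h - a h \<bullet> c)"
definition mu where "mu y = Max (insert 0 ((\<lambda>h. l h y) ` F))"
definition D where "D y = max (1/2) (3 * mu y - 1)"
definition rho where "rho y = c + (1 / D y) *\<^sub>R (y - c)"

lemma cP: "c \<in> P" using cO rel_interior_subset by blast
lemma beta: "h \<in> F \<Longrightarrow> a h \<bullet> c < b h" using cO relint by auto

lemma l_le1: "h \<in> F \<Longrightarrow> l h y \<le> 1 \<longleftrightarrow> a h \<bullet> y \<le> b h"
  using beta[of h] by (simp add: l_def pos_divide_le_eq)
lemma l_less1: "h \<in> F \<Longrightarrow> l h y < 1 \<longleftrightarrow> a h \<bullet> y < b h"
  using beta[of h] by (simp add: l_def pos_divide_less_eq)
lemma l_scale: "l h (c + t *\<^sub>R (y - c)) = t * l h y"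
proof -
  have "a h \<bullet> (c + t *\<^sub>R (y - c)) - a h \<bullet> c = t * (a h \<bullet> y - a h \<bullet> c)"
    by (simp add: inner_add_right inner_diff_right inner_scaleR_right right_diff_distrib)
  then show ?thesis by (simp add: l_def)
qed

lemma mu_le_iff: "mu y \<le> t \<longleftrightarrow> 0 \<le> t \<and> (\<forall>h\<in>F. l h y \<le> t)"
  by (simp add: mu_def finF)
lemma mu_less_iff: "mu y < t \<longleftrightarrow> 0 < t \<and> (\<forall>h\<in>F. l h y < t)"
  by (simp add: mu_def finF)
lemma mu_ge0: "0 \<le> mu y"
  by (simp add: mu_def finF Max_ge_iff)
lemma l_le_mu: "h \<in> F \<Longrightarrow> l h y \<le> mu y"
  by (simp add: mu_def finF Max_ge_iff)

lemma mu_scale: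
  assumes "0 \<le> t" shows "mu (c + t *\<^sub>R (y - c)) = t * mu y"
proof -
  have m: "mono ((*) t)" by (rule monoI) (simp add: mult_left_mono assms)
  have "mu (c + t *\<^sub>R (y - c)) = Max ((*) t ` insert 0 ((\<lambda>h. l h y) ` F))"
    by (simp add: mu_def l_scale image_image)
  also have "\<dots> = t * mu y"
    unfolding mu_def by (rule mono_Max_commute[OF m, symmetric]) (auto simp: finF)
  finally show ?thesis .
qed

lemma l_cont: "isCont (l h) x"
proof -
  have "l h = (\<lambda>y. (a h \<bullet> y - a h \<bullet> c) * inverse (b h - a h \<bullet> c))"
    by (auto simp: l_def divide_inverse)
  then show ?thesis by (simp add: continuous_intros)
qed

lemma mu_cont: "isCont mu x"
  unfolding mu_def[abs_def] by (rule isCont_Max_ins[OF finF l_cont])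

lemma cA: "c \<in> affine hull P" using cP hull_subset[of P affine] by blast

lemma aff_comb: "y \<in> affine hull P \<Longrightarrow> c + t *\<^sub>R (y - c) \<in> affine hull P"
proof -
  assume y: "y \<in> affine hull P"
  have "(1 - t) *\<^sub>R c + t *\<^sub>R y \<in> affine hull P"
    by (rule mem_affine[OF affine_affine_hull cA y]) simp
  moreover have "(1 - t) *\<^sub>R c + t *\<^sub>R y = c + t *\<^sub>R (y - c)" by (simp add: algebra_simps)
  ultimately show ?thesis by simp
qed

lemma memP0: "y \<in> P \<longleftrightarrow> y \<in> affine hull P \<and> (\<forall>h\<in>F. a h \<bullet> y \<le> b h)"
proof -
  have "y \<in> P \<longleftrightarrow> y \<in> affine hull P \<inter> \<Inter>F" by (rule arg_cong[where f="\<lambda>S. y \<in> S", OF seq])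
  also have "\<dots> \<longleftrightarrow> y \<in> affine hull P \<and> (\<forall>h\<in>F. a h \<bullet> y \<le> b h)"
  proof -
    have "y \<in> h \<longleftrightarrow> a h \<bullet> y \<le> b h" if "h \<in> F" for h
      using arg_cong[where f="\<lambda>S. y \<in> S", OF faceq[OF that, THEN conjunct2]] by simp
    then show ?thesis by blast
  qed
  finally show ?thesis .
qed

lemma memP: "y \<in> P \<longleftrightarrow> y \<in> affine hull P \<and> mu y \<le> 1"
  using memP0 l_le1 mu_le_iff by auto

lemma memO: "y \<in> rel_interior P \<longleftrightarrow> y \<in> affine hull P \<and> mu y < 1"
proof -
  have "y \<in> rel_interior P \<longleftrightarrow> y \<in> P \<and> (\<forall>h\<in>F. a h \<bullet> y < b h)"
    by (rule arg_cong[where f="\<lambda>S. y \<in> S", OF relint, simplified])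
  then show ?thesis using memP0 l_less1 mu_less_iff by fastforce
qed

lemma D_ge: "1/2 \<le> D y" by (simp add: D_def)
lemma D_pos: "0 < D y" using D_ge[of y] by linarith
lemma mu_le_D: "mu y \<le> D y" by (auto simp: D_def max_def)

lemma mu_rho: "mu (rho y) = mu y / D y"
  unfolding rho_def using mu_scale[of "1 / D y" y] D_pos[of y] by simp

lemma rho_P: "y \<in> affine hull P \<Longrightarrow> rho y \<in> P"
  unfolding memP
proof
  assume "y \<in> affine hull P"
  then show "rho y \<in> affine hull P" unfolding rho_def by (rule aff_comb)
  show "mu (rho y) \<le> 1" unfolding mu_rho using mu_le_D[of y] D_pos[of y] by simp
qed

lemma half:
  assumes w: "w \<in> P"
  shows "c + (1/2) *\<^sub>R (w - c) \<in> rel_interior P \<and> rho (c + (1/2) *\<^sub>R (w - c)) = w"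
proof -
  let ?y = "c + (1/2) *\<^sub>R (w - c)"
  have wA: "w \<in> affine hull P" and mw: "mu w \<le> 1" using w memP by auto
  have my: "mu ?y = mu w / 2" using mu_scale[of "1/2" w] by simp
  have "?y \<in> rel_interior P" unfolding memO using aff_comb[OF wA] my mw by simp
  moreover have "D ?y = 1/2" unfolding D_def my using mw by (simp add: max_def)
  then have "rho ?y = w" unfolding rho_def by (simp add: algebra_simps)
  ultimately show ?thesis by blast
qed

lemma rho_image: "rho ` rel_interior P = P"
proof
  show "rho ` rel_interior P \<subseteq> P"
    using rho_P memO by auto
  show "P \<subseteq> rho ` rel_interior P"
  proof
    fix w assume "w \<in> P"
    then show "w \<in> rho ` rel_interior P" using half[of w] by (metis image_eqI)
  qed
qed

end


definition pfin :: "'a::euclidean_space set \<Rightarrow> bool" where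
  "pfin S \<longleftrightarrow> (\<exists>G. finite G \<and> (\<forall>T\<in>G. polyhedron T) \<and> S = \<Union>G)"

lemma pfin_poly: "polyhedron S \<Longrightarrow> pfin S"
  unfolding pfin_def by (rule exI[of _ "{S}"]) auto

lemma pfin_empty: "pfin {}"
  unfolding pfin_def by (rule exI[of _ "{}"]) auto

lemma pfin_Un: "pfin S \<Longrightarrow> pfin T \<Longrightarrow> pfin (S \<union> T)"
  unfolding pfin_def
proof (elim exE conjE)
  fix G H assume "finite G" "\<forall>T\<in>G. polyhedron T" "S = \<Union>G" "finite H" "\<forall>T\<in>H. polyhedron T" "T = \<Union>H"
  then show "\<exists>K. finite K \<and> (\<forall>T\<in>K. polyhedron T) \<and> S \<union> T = \<Union>K"
    by (intro exI[of _ "G \<union> H"]) auto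
qed

lemma pfin_Int: "pfin S \<Longrightarrow> pfin T \<Longrightarrow> pfin (S \<inter> T)"
  unfolding pfin_def
proof (elim exE conjE)
  fix G H assume "finite G" "\<forall>T\<in>G. polyhedron T" "S = \<Union>G" "finite H" "\<forall>T\<in>H. polyhedron T" "T = \<Union>H"
  then show "\<exists>K. finite K \<and> (\<forall>T\<in>K. polyhedron T) \<and> S \<inter> T = \<Union>K"
    by (intro exI[of _ "(\<lambda>(X,Y). X \<inter> Y) ` (G \<times> H)"]) auto
qed

lemma pfin_UN: "finite I \<Longrightarrow> (\<And>i. i \<in> I \<Longrightarrow> pfin (f i)) \<Longrightarrow> pfin (\<Union>i\<in>I. f i)"
  by (induction I rule: finite_induct) (auto intro: pfin_Un pfin_empty)

lemma pfin_INT: "finite I \<Longrightarrow> (\<And>i. i \<in> I \<Longrightarrow> pfin (f i)) \<Longrightarrow> pfin (\<Inter>i\<in>I. f i)"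
  by (induction I rule: finite_induct) (auto intro: pfin_Int pfin_poly)

lemma pfin_le: "pfin {y::'a::euclidean_space. p \<bullet> y + q \<le> p' \<bullet> y + q'}"
proof -
  have "{y::'a. p \<bullet> y + q \<le> p' \<bullet> y + q'} = {y. (p - p') \<bullet> y \<le> q' - q}"
    by (auto simp: inner_diff_left)
  then show ?thesis using pfin_poly polyhedron_halfspace_le by metis
qed

lemma PF:
  assumes "polytope P" "pfin S"
  shows "pl_polyhedron (P \<inter> S)"
proof -
  from assms(2) obtain G where G: "finite G" "\<forall>T\<in>G. polyhedron T" "S = \<Union>G" unfolding pfin_def by blast
  have pt: "\<exists>v. finite v \<and> P \<inter> T = convex hull v" if "T \<in> G" for T
  proof -
    have "polytope (P \<inter> T)" using polytope_Int_polyhedron[OF assms(1)] G that by blast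
    then show ?thesis unfolding polytope_def .
  qed
  define V where "V T = (SOME v. finite v \<and> P \<inter> T = convex hull v)" for T
  have V: "finite (V T) \<and> P \<inter> T = convex hull (V T)" if "T \<in> G" for T
    unfolding V_def by (rule someI_ex) (use pt that in blast)
  show ?thesis unfolding pl_polyhedron_def
  proof (intro exI conjI)
    show "finite (V ` G)" using G by simp
    show "\<forall>A\<in>V ` G. finite A" using V by blast
    have "P \<inter> S = (\<Union>T\<in>G. P \<inter> T)" using G(3) by blast
    also have "\<dots> = (\<Union>T\<in>G. convex hull (V T))" using V by simp
    finally show "P \<inter> S = \<Union> ((\<lambda>A. convex hull A) ` V ` G)" by (simp add: image_image)
  qed
qed

lemma pl_decomp:
  assumes "pl_polyhedron R"
  shows "\<exists>G. finite G \<and> (\<forall>T\<in>G. polytope T) \<and> R = \<Union>G"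
proof -
  from assms obtain \<F> where F: "finite \<F>" "\<forall>A\<in>\<F>. finite A" "R = \<Union> ((\<lambda>A. convex hull A) ` \<F>)"
    unfolding pl_polyhedron_def by blast
  have "\<forall>T\<in>(\<lambda>A. convex hull A) ` \<F>. polytope T" using F(2) unfolding polytope_def by blast
  then show ?thesis using F by (intro exI[of _ "(\<lambda>A. convex hull A) ` \<F>"] conjI) simp_all
qed

lemma pl_compact: "pl_polyhedron R \<Longrightarrow> compact R"
proof -
  assume "pl_polyhedron R"
  then obtain G where "finite G" "\<forall>T\<in>G. polytope T" "R = \<Union>G" using pl_decomp by blast
  then show "compact R" using polytope_imp_compact by (metis compact_Union)
qed

lemma pl_Un: "pl_polyhedron R \<Longrightarrow> pl_polyhedron S \<Longrightarrow> pl_polyhedron (R \<union> S)"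
  unfolding pl_polyhedron_def
proof (elim exE conjE)
  fix F G assume "finite F" "\<forall>A\<in>F. finite A" "R = \<Union> ((\<lambda>A. convex hull A) ` F)"
      "finite G" "\<forall>A\<in>G. finite A" "S = \<Union> ((\<lambda>A. convex hull A) ` G)"
  then show "\<exists>\<F>. finite \<F> \<and> (\<forall>A\<in>\<F>. finite A) \<and> R \<union> S = \<Union> ((\<lambda>A. convex hull A) ` \<F>)"
    by (intro exI[of _ "F \<union> G"] conjI) (simp_all add: image_Un ball_Un)
qed

lemma polytope_halfspaces:
  fixes T :: "'a::euclidean_space set"
  assumes "polytope T"
  shows "\<exists>H. finite H \<and> T = \<Inter>H \<and> (\<forall>h\<in>H. \<exists>u r. h = {x. u \<bullet> x \<le> r})"
proof -
  from polytope_imp_polyhedron[OF assms] obtain H where H: "finite H" "T = \<Inter>H"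
      "\<forall>h\<in>H. \<exists>a b. a \<noteq> 0 \<and> h = {x. a \<bullet> x \<le> b}"
    unfolding polyhedron_def by blast
  have "\<exists>u r. h = {x. u \<bullet> x \<le> r}" if "h \<in> H" for h
  proof -
    obtain u r where "h = {x. u \<bullet> x \<le> r}" using H(3) \<open>h \<in> H\<close> by meson
    then show ?thesis by (intro exI)
  qed
  then show ?thesis using H(1,2) by (intro exI[of _ H]) simp
qed

lemma box_nbhd:
  fixes P :: "'a::euclidean_space set"
  assumes P: "polytope P" and w: "w \<in> P" and e: "e > 0"
  shows "\<exists>V\<in>Sub_o P. w \<in> V \<and> V \<subseteq> ball w e"
proof -
  define \<delta> where "\<delta> = e / real DIM('a)"
  have \<delta>: "\<delta> > 0" using e by (simp add: \<delta>_def)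
  define S where "S = (\<Union>i\<in>Basis. {x. i \<bullet> x \<le> w \<bullet> i - \<delta>} \<union> {x. i \<bullet> x \<ge> w \<bullet> i + \<delta>})"
  have "pfin S" unfolding S_def
    by (intro pfin_UN finite_Basis pfin_Un pfin_poly polyhedron_halfspace_le polyhedron_halfspace_ge)
  then have R: "pl_polyhedron (P \<inter> S)" by (rule PF[OF P])
  have V: "P - (P \<inter> S) \<in> Sub_o P" unfolding Sub_o_def
    by (intro CollectI exI[of _ "P \<inter> S"] conjI) (use R in auto)
  have "w \<notin> S" using \<delta> by (auto simp: S_def inner_commute)
  then have "w \<in> P - (P \<inter> S)" using w by blast
  moreover have "P - (P \<inter> S) \<subseteq> ball w e"
  proof
    fix z assume z: "z \<in> P - (P \<inter> S)"
    have zi: "\<bar>(z - w) \<bullet> i\<bar> < \<delta>" if "i \<in> Basis" for i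
    proof -
      have "\<not> i \<bullet> z \<le> w \<bullet> i - \<delta> \<and> \<not> i \<bullet> z \<ge> w \<bullet> i + \<delta>" using z that by (auto simp: S_def)
      moreover have "i \<bullet> z = z \<bullet> i" by (rule inner_commute)
      ultimately show ?thesis by (simp add: inner_diff_left abs_less_iff)
    qed
    have "norm (z - w) \<le> (\<Sum>i\<in>Basis. \<bar>(z - w) \<bullet> i\<bar>)" by (rule norm_le_l1)
    also have "\<dots> < (\<Sum>i\<in>(Basis::'a set). \<delta>)"
      by (rule sum_strict_mono) (use zi in auto)
    also have "\<dots> = real DIM('a) * \<delta>" by simp
    also have "\<dots> = e" unfolding \<delta>_def by simp
    finally have "norm (z - w) < e" .
    then show "z \<in> ball w e" by (metis dist_commute dist_norm mem_ball)
  qed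
  ultimately have "w \<in> P - (P \<inter> S) \<and> P - (P \<inter> S) \<subseteq> ball w e" by (rule conjI)
  then show ?thesis by (rule bexI[OF _ V])
qed


lemma pfin_form:
  fixes f k :: "'a::euclidean_space \<Rightarrow> real"
  assumes "\<And>y. f y = p \<bullet> y + q" "\<And>y. k y = p' \<bullet> y + q'"
  shows "pfin {y. f y \<le> k y}"
  using pfin_le[of p q p' q'] assms by simp

context gs begin

lemma rho_open:
  assumes y: "y \<in> rel_interior P" and \<epsilon>: "\<epsilon> > 0"
  shows "\<exists>e>0. \<forall>w\<in>P. dist w (rho y) < e \<longrightarrow> (\<exists>y'\<in>rel_interior P. dist y' y < \<epsilon> \<and> rho y' = w)"
proof (cases "mu y \<le> 1/2")
  case True
  have Dy: "D y = 1/2" using True by (simp add: D_def max_def)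
  have ry: "rho y = c + 2 *\<^sub>R (y - c)" by (simp add: rho_def Dy)
  show ?thesis
  proof (intro exI[of _ "2 * \<epsilon>"] conjI ballI impI)
    show "2 * \<epsilon> > 0" using \<epsilon> by simp
    fix w assume w: "w \<in> P" and d: "dist w (rho y) < 2 * \<epsilon>"
    let ?y' = "c + (1/2) *\<^sub>R (w - c)"
    have "?y' - y = (1/2) *\<^sub>R (w - rho y)" unfolding ry by (simp add: algebra_simps)
    then have "dist ?y' y = dist w (rho y) / 2" by (simp add: dist_norm)
    then have "dist ?y' y < \<epsilon>" using d by simp
    then show "\<exists>y'\<in>rel_interior P. dist y' y < \<epsilon> \<and> rho y' = w" using half[OF w] by blast
  qed
next
  case False
  define s where "s = mu y"
  have s1: "s < 1" using memO[of y] y unfolding s_def by blast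
  have s2: "s > 1/2" using False s_def by simp
  have Dy: "D y = 3 * s - 1" using s2 by (simp add: D_def s_def max_def)
  define s' where "s' = s / (3 * s - 1)"
  have ms': "mu (rho y) = s'" by (simp add: mu_rho Dy s_def s'_def)
  have s'2: "s' > 1/2" using s1 s2 by (simp add: s'_def field_simps)
  have s'3: "3 * s' - 1 = 1/(3 * s - 1)" using s2 by (simp add: s'_def field_simps)
  define \<psi> where "\<psi> w = c + (1 / (3 * mu w - 1)) *\<^sub>R (w - c)" for w
  have \<psi>y: "\<psi> (rho y) = y"
  proof -
    have "\<psi> (rho y) = c + (3 * s - 1) *\<^sub>R ((1 / (3 * s - 1)) *\<^sub>R (y - c))"
      unfolding \<psi>_def ms' s'3 by (simp add: rho_def Dy)
    also have "\<dots> = y" using s2 by simp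
    finally show ?thesis .
  qed
  have c1: "isCont (\<lambda>w. 3 * mu w - 1) (rho y)" by (intro continuous_intros mu_cont)
  have "3 * mu (rho y) - 1 \<noteq> 0" using ms' s'2 by simp
  then have c2: "isCont (\<lambda>w. 1 / (3 * mu w - 1)) (rho y)"
    using c1 by (intro continuous_intros mu_cont) auto
  have c\<psi>: "isCont \<psi> (rho y)"
    unfolding \<psi>_def[abs_def] by (intro continuous_add continuous_const continuous_scaleR c2 continuous_diff continuous_ident)
  obtain e1 where e1: "e1 > 0" "\<forall>w. dist w (rho y) < e1 \<longrightarrow> dist (\<psi> w) y < \<epsilon>"
    using c\<psi> \<epsilon> unfolding continuous_at_eps_delta \<psi>y by metis
  have s'4: "s' - 1/2 > 0" using s'2 by simp
  obtain e2 where e2: "e2 > 0" "\<forall>w. dist w (rho y) < e2 \<longrightarrow> dist (mu w) s' < s' - 1/2"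
    using mu_cont[of "rho y"] s'4 unfolding continuous_at_eps_delta ms' by metis
  show ?thesis
  proof (intro exI[of _ "min e1 e2"] conjI ballI impI)
    show "min e1 e2 > 0" using e1 e2 by simp
    fix w assume w: "w \<in> P" and d: "dist w (rho y) < min e1 e2"
    define r where "r = mu w"
    have "dist (mu w) s' < s' - 1/2" using e2 d by simp
    then have r2: "r > 1/2" unfolding r_def dist_real_def by linarith
    have wA: "w \<in> affine hull P" and r1: "r \<le> 1" using w memP r_def by auto
    have rpos: "3 * r - 1 > 0" using r2 by simp
    have my': "mu (\<psi> w) = r / (3 * r - 1)"
      unfolding \<psi>_def using mu_scale[of "1 / (3 * mu w - 1)" w] rpos r_def by simp
    have "\<psi> w \<in> affine hull P" unfolding \<psi>_def by (rule aff_comb[OF wA])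
    moreover have "mu (\<psi> w) < 1" unfolding my' using r2 rpos by (simp add: field_simps)
    ultimately have y'O: "\<psi> w \<in> rel_interior P" using memO by blast
    have "dist (\<psi> w) y < \<epsilon>" using e1 d by simp
    moreover have "rho (\<psi> w) = w"
    proof -
      have "3 * (r / (3 * r - 1)) - 1 = 1 / (3 * r - 1)" using rpos by (simp add: field_simps)
      moreover have "1 / (3 * r - 1) \<ge> 1/2" using r1 rpos by (simp add: field_simps)
      ultimately have DD: "D (\<psi> w) = 1 / (3 * r - 1)" unfolding D_def my' by simp
      have "rho (\<psi> w) = c + (3 * r - 1) *\<^sub>R ((1 / (3 * r - 1)) *\<^sub>R (w - c))"
        unfolding rho_def DD by (simp add: \<psi>_def r_def)
      also have "\<dots> = w" using rpos by simp
      finally show ?thesis .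
    qed
    ultimately show "\<exists>y'\<in>rel_interior P. dist y' y < \<epsilon> \<and> rho y' = w" using y'O by blast
  qed
qed

end


context gs begin

lemma mu_in: "mu y \<in> insert 0 ((\<lambda>h. l h y) ` F)"
  unfolding mu_def by (rule Max_in) (auto simp: finF)

lemma le_mu: "t \<in> insert 0 ((\<lambda>h. l h y) ` F) \<Longrightarrow> t \<le> mu y"
  unfolding mu_def by (rule Max_ge) (auto simp: finF)

lemma pfin_Sh:
  assumes "h \<in> F"
  shows "pfin {y. u \<bullet> y - u \<bullet> c \<le> C * (3 * l h y - 1)}"
proof (rule pfin_form)
  define \<beta> where "\<beta> = b h - a h \<bullet> c"
  have \<beta>: "\<beta> > 0" using beta[OF assms] by (simp add: \<beta>_def)
  show "u \<bullet> y - u \<bullet> c = u \<bullet> y + (- (u \<bullet> c))" for y by simp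
  show "C * (3 * l h y - 1) = ((3 * C / \<beta>) *\<^sub>R a h) \<bullet> y + (- (3 * C / \<beta>) * (a h \<bullet> c) - C)" for y
    using \<beta> by (simp add: l_def \<beta>_def[symmetric] field_simps)
qed

lemma pfin_g:
  shows "pfin {y. u \<bullet> y - u \<bullet> c \<le> K}"
  by (rule pfin_form[where p=u and q="- (u \<bullet> c)" and p'=0 and q'=K]) simp_all

lemma pre_half: "pfin {y. rho y \<in> {z. u \<bullet> z \<le> r}}"
proof -
  define C where "C = r - u \<bullet> c"
  define g where "g y = u \<bullet> y - u \<bullet> c" for y
  have eq: "rho y \<in> {z. u \<bullet> z \<le> r} \<longleftrightarrow> g y \<le> C * D y" for y
  proof -
    have "u \<bullet> rho y = u \<bullet> c + g y / D y"
      by (simp add: rho_def g_def inner_add_right inner_scaleR_right inner_diff_right)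
    then have "rho y \<in> {z. u \<bullet> z \<le> r} \<longleftrightarrow> g y / D y \<le> C" by (simp add: C_def) linarith
    also have "\<dots> \<longleftrightarrow> g y \<le> C * D y" using D_pos[of y] by (simp add: pos_divide_le_eq mult.commute)
    finally show ?thesis .
  qed
  have Dc: "D y = 1/2 \<or> D y = 3 * mu y - 1" for y by (simp add: D_def max_def)
  have D3: "3 * mu y - 1 \<le> D y" for y by (simp add: D_def)
  show ?thesis
  proof (cases "C \<ge> 0")
    case True
    have "g y \<le> C * D y \<longleftrightarrow> g y \<le> C / 2 \<or> g y \<le> C * (3 * 0 - 1) \<or> (\<exists>h\<in>F. g y \<le> C * (3 * l h y - 1))" for y
    proof
      assume A: "g y \<le> C * D y"
      show "g y \<le> C / 2 \<or> g y \<le> C * (3 * 0 - 1) \<or> (\<exists>h\<in>F. g y \<le> C * (3 * l h y - 1))"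
      proof (cases "D y = 1/2")
        case True
        from A have "g y \<le> C * (1/2)" by (simp only: True)
        then show ?thesis by simp
      next
        case False then have "D y = 3 * mu y - 1" using Dc by blast
        then have B: "g y \<le> C * (3 * mu y - 1)" using A by simp
        from mu_in[of y] have "mu y = 0 \<or> (\<exists>h\<in>F. mu y = l h y)" by blast
        then show ?thesis using B by auto
      qed
    next
      assume A: "g y \<le> C / 2 \<or> g y \<le> C * (3 * 0 - 1) \<or> (\<exists>h\<in>F. g y \<le> C * (3 * l h y - 1))"
      have "C / 2 \<le> C * D y" using D_ge[of y] True by (simp add: mult_left_mono[of "1/2" "D y" C, simplified])
      moreover have "C * (3 * t - 1) \<le> C * D y" if "t \<le> mu y" for t
        using mult_left_mono[of "3 * t - 1" "D y" C] that D3[of y] True by simp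
      ultimately show "g y \<le> C * D y" using A le_mu[of 0 y] le_mu[of _ y]
        by (metis (no_types, lifting) image_eqI insertCI order.trans)
    qed
    then have "{y. rho y \<in> {z. u \<bullet> z \<le> r}} =
        {y. g y \<le> C / 2} \<union> {y. g y \<le> C * (3 * 0 - 1)} \<union> (\<Union>h\<in>F. {y. g y \<le> C * (3 * l h y - 1)})"
      using eq by blast
    moreover have "pfin \<dots>" unfolding g_def
      by (intro pfin_Un pfin_g pfin_UN finF pfin_Sh)
    ultimately show ?thesis by simp
  next
    case False
    have "g y \<le> C * D y \<longleftrightarrow> g y \<le> C / 2 \<and> g y \<le> C * (3 * 0 - 1) \<and> (\<forall>h\<in>F. g y \<le> C * (3 * l h y - 1))" for y
    proof
      assume A: "g y \<le> C * D y"
      have "C * D y \<le> C / 2" using D_ge[of y] False by (simp add: mult_left_mono_neg[of "1/2" "D y" C, simplified])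
      moreover have "C * D y \<le> C * (3 * t - 1)" if "t \<le> mu y" for t
        using mult_left_mono_neg[of "3 * t - 1" "D y" C] that D3[of y] False by simp
      ultimately show "g y \<le> C / 2 \<and> g y \<le> C * (3 * 0 - 1) \<and> (\<forall>h\<in>F. g y \<le> C * (3 * l h y - 1))"
        using A le_mu[of 0 y] le_mu[of _ y] by (meson image_eqI insertCI order.trans)
    next
      assume A: "g y \<le> C / 2 \<and> g y \<le> C * (3 * 0 - 1) \<and> (\<forall>h\<in>F. g y \<le> C * (3 * l h y - 1))"
      show "g y \<le> C * D y"
      proof (cases "D y = 1/2")
        case True
        have "g y \<le> C * (1/2)" using A by simp
        then show ?thesis by (simp only: True)
      next
        case False then have D: "D y = 3 * mu y - 1" using Dc by blast
        from mu_in[of y] have "mu y = 0 \<or> (\<exists>h\<in>F. mu y = l h y)" by blast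
        then show ?thesis unfolding D using A by auto
      qed
    qed
    then have "{y. rho y \<in> {z. u \<bullet> z \<le> r}} =
        {y. g y \<le> C / 2} \<inter> {y. g y \<le> C * (3 * 0 - 1)} \<inter> (\<Inter>h\<in>F. {y. g y \<le> C * (3 * l h y - 1)})"
      using eq by blast
    moreover have "pfin \<dots>" unfolding g_def
      by (intro pfin_Int pfin_g pfin_INT finF pfin_Sh)
    ultimately show ?thesis by simp
  qed
qed

lemma pre_polytope:
  assumes "polytope T"
  shows "pfin {y. rho y \<in> T}"
proof -
  obtain H where H: "finite H" "T = \<Inter>H" "\<forall>h\<in>H. \<exists>u r. h = {x. u \<bullet> x \<le> r}"
    using polytope_halfspaces[OF assms] by blast
  have "{y. rho y \<in> T} = (\<Inter>h\<in>H. {y. rho y \<in> h})" using H(2) by auto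
  moreover have "pfin (\<Inter>h\<in>H. {y. rho y \<in> h})"
  proof (rule pfin_INT[OF H(1)])
    fix h assume "h \<in> H"
    then obtain u r where "h = {x. u \<bullet> x \<le> r}" using H(3) by meson
    then show "pfin {y. rho y \<in> h}" using pre_half by simp
  qed
  ultimately show ?thesis by simp
qed

lemma pre_pl:
  assumes "pl_polyhedron R"
  shows "pl_polyhedron (P \<inter> {y. rho y \<in> R})"
proof -
  obtain G where G: "finite G" "\<forall>T\<in>G. polytope T" "R = \<Union>G" using pl_decomp[OF assms] by blast
  have "{y. rho y \<in> R} = (\<Union>T\<in>G. {y. rho y \<in> T})" using G(3) by auto
  moreover have "pfin (\<Union>T\<in>G. {y. rho y \<in> T})"
    by (rule pfin_UN[OF G(1)]) (use G(2) pre_polytope in blast)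
  ultimately show ?thesis using PF[OF poly] by simp
qed

lemma O_Sub: "rel_interior P \<in> Sub_o P"
proof -
  define R0 where "R0 = P \<inter> (\<Union>h\<in>F. {x. a h \<bullet> x \<ge> b h})"
  have "pfin (\<Union>h\<in>F. {x. a h \<bullet> x \<ge> b h})"
    by (intro pfin_UN finF pfin_poly polyhedron_halfspace_ge)
  then have R0: "pl_polyhedron R0" unfolding R0_def by (rule PF[OF poly])
  have "rel_interior P = P - R0" unfolding relint R0_def by (auto simp: not_le)
  then show ?thesis unfolding Sub_o_def using R0 R0_def
    by (intro CollectI exI[of _ R0] conjI) auto
qed

lemma Sub_Int: "U \<in> Sub_o P \<Longrightarrow> V \<in> Sub_o P \<Longrightarrow> U \<inter> V \<in> Sub_o P"
proof -
  assume "U \<in> Sub_o P" "V \<in> Sub_o P"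
  then obtain R1 R2 where R: "U = P - R1" "R1 \<subseteq> P" "pl_polyhedron R1"
      "V = P - R2" "R2 \<subseteq> P" "pl_polyhedron R2"
    unfolding Sub_o_def by blast
  then have "U \<inter> V = P - (R1 \<union> R2)" by blast
  then show "U \<inter> V \<in> Sub_o P" unfolding Sub_o_def using R pl_Un[of R1 R2]
    by (intro CollectI exI[of _ "R1 \<union> R2"] conjI) auto
qed

lemma OP: "rel_interior P \<subseteq> P" by (rule rel_interior_subset)

lemma pre_Sub:
  assumes "V \<in> Sub_o P"
  shows "{y\<in>rel_interior P. rho y \<in> V} \<in> Sub_o_rel P (rel_interior P)"
proof -
  obtain R where R: "V = P - R" "R \<subseteq> P" "pl_polyhedron R"
    using assms unfolding Sub_o_def by blast
  define U where "U = P - (P \<inter> {y. rho y \<in> R})"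
  have U: "U \<in> Sub_o P" unfolding Sub_o_def U_def using pre_pl[OF R(3)]
    by (intro CollectI exI[of _ "P \<inter> {y. rho y \<in> R}"] conjI) auto
  have rP: "rho y \<in> P" if "y \<in> rel_interior P" for y using that memO rho_P by blast
  have "{y\<in>rel_interior P. rho y \<in> V} = U \<inter> rel_interior P"
    unfolding U_def R(1) using rP OP by blast
  then show ?thesis unfolding Sub_o_rel_def using U by blast
qed

lemma opn:
  assumes W: "W \<in> Sub_o_rel P (rel_interior P)" and y: "y \<in> W"
  shows "\<exists>V\<in>Sub_o P. rho y \<in> V \<and> V \<subseteq> rho ` W"
proof -
  obtain U where U: "U \<in> Sub_o P" "W = U \<inter> rel_interior P" using W unfolding Sub_o_rel_def by blast
  obtain R where R: "U = P - R" "R \<subseteq> P" "pl_polyhedron R"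
    using U(1) unfolding Sub_o_def by blast
  have "closed R" using pl_compact[OF R(3)] compact_imp_closed by blast
  then have "open (- R)" by (simp add: open_Compl)
  moreover have yR: "y \<in> - R" "y \<in> rel_interior P" using y U R by auto
  ultimately obtain \<epsilon> where \<epsilon>: "\<epsilon> > 0" "ball y \<epsilon> \<subseteq> - R" using open_contains_ball by blast
  obtain e where e: "e > 0" "\<forall>w\<in>P. dist w (rho y) < e \<longrightarrow> (\<exists>y'\<in>rel_interior P. dist y' y < \<epsilon> \<and> rho y' = w)"
    using rho_open[OF yR(2) \<epsilon>(1)] by blast
  have ryP: "rho y \<in> P" using yR(2) memO rho_P by blast
  obtain V where V: "V \<in> Sub_o P" "rho y \<in> V" "V \<subseteq> ball (rho y) e"
    using box_nbhd[OF poly ryP e(1)] by blast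
  have VP: "V \<subseteq> P" using V(1) unfolding Sub_o_def by blast
  have "V \<subseteq> rho ` W"
  proof
    fix w assume w: "w \<in> V"
    then have "w \<in> P" "dist w (rho y) < e" using VP V(3) by (auto simp: dist_commute)
    then obtain y' where y': "y' \<in> rel_interior P" "dist y' y < \<epsilon>" "rho y' = w" using e(2) by blast
    have "y' \<in> ball y \<epsilon>" using y'(2) by (simp add: dist_commute)
    then have "y' \<notin> R" using \<epsilon>(2) by blast
    then have "y' \<in> W" using y'(1) OP U(2) R(1) by blast
    then show "w \<in> rho ` W" using y'(3) by blast
  qed
  then show ?thesis using V by blast
qed

end


lemma pl_convex_polytope:
  fixes P :: "'a::euclidean_space set"
  assumes "pl_polyhedron P" "convex P"
  shows "polytope P"
proof -
  from assms(1) obtain \<F> where F: "finite \<F>" "\<forall>A\<in>\<F>. finite A" "P = \<Union> ((\<lambda>A. convex hull A) ` \<F>)"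
    unfolding pl_polyhedron_def by blast
  define B where "B = \<Union>\<F>"
  have fB: "finite B" unfolding B_def using F by blast
  have "B \<subseteq> P"
  proof
    fix x assume "x \<in> B"
    then obtain A where "A \<in> \<F>" "x \<in> A" unfolding B_def by blast
    then have "x \<in> convex hull A" using hull_subset[of A convex] by blast
    then show "x \<in> P" using F(3) \<open>A \<in> \<F>\<close> by blast
  qed
  then have "convex hull B \<subseteq> P" by (rule hull_minimal) (rule assms(2))
  moreover have "P \<subseteq> convex hull B"
  proof
    fix x assume "x \<in> P"
    then obtain A where A: "A \<in> \<F>" "x \<in> convex hull A" using F(3) by blast
    have "A \<subseteq> B" unfolding B_def using A(1) by blast
    then have "convex hull A \<subseteq> convex hull B" by (rule hull_mono)
    then show "x \<in> convex hull B" using A(2) by blast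
  qed
  ultimately have "P = convex hull B" by blast
  then show ?thesis unfolding polytope_def using fB by blast
qed

lemma Sub_o_empty: "Sub_o ({}::'a::euclidean_space set) = {{}}"
proof -
  have "pl_polyhedron ({}::'a set)" unfolding pl_polyhedron_def
    by (intro exI[of _ "{}"]) simp
  then show ?thesis unfolding Sub_o_def by auto
qed

theorem lemma5p8:
  fixes P :: "'a::euclidean_space set"
  assumes "pl_polyhedron P" and "convex P"
  shows "Logic_of (Sub_o P) P = Logic_of (Sub_o_rel P (rel_interior P)) (rel_interior P)"
proof (cases "P = {}")
  case True
  have "Sub_o_rel P (rel_interior P) = Sub_o P"
    unfolding True Sub_o_rel_def Sub_o_empty by auto
  then show ?thesis using True by simp
next
  case False
  have poly: "polytope P" by (rule pl_convex_polytope[OF assms])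
  have "polyhedron P" using poly by (rule polytope_imp_polyhedron)
  then obtain F where F: "finite F" "P = affine hull P \<inter> \<Inter>F"
      "\<forall>h\<in>F. \<exists>a b. a \<noteq> 0 \<and> h = {x. a \<bullet> x \<le> b}"
      "\<forall>F'. F' \<subset> F \<longrightarrow> P \<subset> affine hull P \<inter> \<Inter>F'"
    unfolding polyhedron_Int_affine_minimal by blast
  from bchoice[OF F(3)] obtain a where a: "\<forall>h\<in>F. \<exists>b. a h \<noteq> 0 \<and> h = {x. a h \<bullet> x \<le> b}" ..
  from bchoice[OF a] obtain b where b: "\<forall>h\<in>F. a h \<noteq> 0 \<and> h = {x. a h \<bullet> x \<le> b h}" ..
  have faceq: "\<And>h. h \<in> F \<Longrightarrow> a h \<noteq> 0 \<and> h = {x. a h \<bullet> x \<le> b h}" using b by (rule bspec)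
  have psub: "\<And>F'. F' \<subset> F \<Longrightarrow> P \<subset> affine hull P \<inter> \<Inter>F'" by (rule F(4)[rule_format])
  have relint: "rel_interior P = {x \<in> P. \<forall>h \<in> F. a h \<bullet> x < b h}"
    by (rule rel_interior_polyhedron_explicit[OF F(1) F(2) faceq psub])
  have "rel_interior P \<noteq> {}" using False rel_interior_eq_empty[OF assms(2)] by blast
  then obtain c where c: "c \<in> rel_interior P" by blast
  interpret gs P c F a b
    by (unfold_locales) (use poly F(1) F(2) faceq relint c in auto)
  have L1: "Logic_of (Sub_o P) P \<subseteq> Logic_of (Sub_o_rel P (rel_interior P)) (rel_interior P)"
    unfolding Sub_o_rel_def
    by (rule dir1[OF O_Sub]) (use Sub_Int OP in blast)+
  have L2: "Logic_of (Sub_o_rel P (rel_interior P)) (rel_interior P) \<subseteq> Logic_of (Sub_o P) P"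
  proof (rule dir2[where \<rho> = rho])
    show "\<forall>W\<in>Sub_o_rel P (rel_interior P). W \<subseteq> rel_interior P"
      unfolding Sub_o_rel_def by blast
    show "\<forall>V\<in>Sub_o P. {y\<in>rel_interior P. rho y \<in> V} \<in> Sub_o_rel P (rel_interior P)"
      using pre_Sub by blast
    show "\<forall>W\<in>Sub_o_rel P (rel_interior P). \<forall>y\<in>W. \<exists>V\<in>Sub_o P. rho y \<in> V \<and> V \<subseteq> rho ` W"
      using opn by blast
    show "rho ` rel_interior P = P" by (rule rho_image)
    show "\<forall>W\<in>Sub_o P. W \<subseteq> P" unfolding Sub_o_def by blast
  qed
  show ?thesis using L1 L2 by blast
qed

end
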